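(* Let $f:\mathbb{R}^n\to\mathbb{R}^m$ be continuous at $\bar x\in\mathbb{R}^n$. Then $f$ is strongly regular around $\bar x$ if and only if $f$ is both linearly open (equivalently, metrically regular) around $\bar x$ and metrically injective around $\bar x$. In this case $\operatorname{inj}(f,\bar x)\ge\operatorname{lop}(f,\bar x)$.
   Context: $B(x,r)$ and $B^\circ(x,r)$ denote closed and open balls. $f$ is linearly open around $\bar x$ if there exist $\alpha>0$ and neighbourhoods $U$ of $\bar x$, $V$ of $f(\bar x)$ with $B^\circ(f(x),\alpha r)\cap V\subseteq f(B^\circ(x,r))$ for all $x\in U$, $r>0$; $\operatorname{lop}(f,\bar x)$ is the supremum of such $\alpha$ ($0$ if none). (Equivalently, $f$ is metrically regular around $\bar x$: there exist $\kappa>0$ and neighbourhoods $U,V$ with $\operatorname{dist}(x,f^{-1}(y))\le\kappa\|y-f(x)\|$ for all $(x,y)\in U\times V$; the infimum of such $\kappa$ is $\operatorname{reg}(f,\bar x)$, and $\operatorname{lop}(f,\bar x)\cdot\operatorname{reg}(f,\bar x)=1$.) $f$ is strongly regular around $\bar x$ if it is linearly open around $\bar x$ and there exist neighbourhoods $U$ of $\bar x$ and $V$ of $f(\bar x)$ such that $f^{-1}(y)\cap U$ is a singleton for every $y\in V$. $f$ is metrically injective around $\bar x$ if there exist $\beta,\delta>0$ with $\|f(x_1)-f(x_2)\|\ge\beta\|x_1-x_2\|$ for all $x_1,x_2\in B(\bar x,\delta)$; $\operatorname{inj}(f,\bar x)$ is the supremum of such $\beta$. *)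

theory Defs
  imports "HOL-Analysis.Analysis"
begin

text \<open>A set U is a neighbourhood of x iff x lies in its interior.\<close>

definition lin_open_with :: "('a::euclidean_space \<Rightarrow> 'b::euclidean_space) \<Rightarrow> 'a \<Rightarrow> real \<Rightarrow> bool" where
  "lin_open_with f xbar \<alpha> \<longleftrightarrow> \<alpha> > 0 \<and>
     (\<exists>U V. xbar \<in> interior U \<and> f xbar \<in> interior V \<and>
        (\<forall>x\<in>U. \<forall>r>0. ball (f x) (\<alpha> * r) \<inter> V \<subseteq> f ` ball x r))"

definition linearly_open :: "('a::euclidean_space \<Rightarrow> 'b::euclidean_space) \<Rightarrow> 'a \<Rightarrow> bool" where
  "linearly_open f xbar \<longleftrightarrow> (\<exists>\<alpha>. lin_open_with f xbar \<alpha>)"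

definition lop :: "('a::euclidean_space \<Rightarrow> 'b::euclidean_space) \<Rightarrow> 'a \<Rightarrow> ereal" where
  "lop f xbar = (if linearly_open f xbar then Sup {ereal \<alpha> | \<alpha>. lin_open_with f xbar \<alpha>} else 0)"

definition strongly_regular :: "('a::euclidean_space \<Rightarrow> 'b::euclidean_space) \<Rightarrow> 'a \<Rightarrow> bool" where
  "strongly_regular f xbar \<longleftrightarrow> linearly_open f xbar \<and>
     (\<exists>U V. xbar \<in> interior U \<and> f xbar \<in> interior V \<and>
        (\<forall>y\<in>V. \<exists>!x. x \<in> U \<and> f x = y))"

definition metr_inj_with :: "('a::euclidean_space \<Rightarrow> 'b::euclidean_space) \<Rightarrow> 'a \<Rightarrow> real \<Rightarrow> bool" where
  "metr_inj_with f xbar \<beta> \<longleftrightarrow> \<beta> > 0 \<and>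
     (\<exists>\<delta>>0. \<forall>x1\<in>cball xbar \<delta>. \<forall>x2\<in>cball xbar \<delta>. norm (f x1 - f x2) \<ge> \<beta> * norm (x1 - x2))"

definition metrically_injective :: "('a::euclidean_space \<Rightarrow> 'b::euclidean_space) \<Rightarrow> 'a \<Rightarrow> bool" where
  "metrically_injective f xbar \<longleftrightarrow> (\<exists>\<beta>. metr_inj_with f xbar \<beta>)"

definition inj_mod :: "('a::euclidean_space \<Rightarrow> 'b::euclidean_space) \<Rightarrow> 'a \<Rightarrow> ereal" where
  "inj_mod f xbar = (if metrically_injective f xbar then Sup {ereal \<beta> | \<beta>. metr_inj_with f xbar \<beta>} else 0)"

end

theory Submission
  imports Defs
begin

lemma back_dir:
  fixes f :: "'a::euclidean_space \<Rightarrow> 'b::euclidean_space"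
  assumes lo: "linearly_open f xbar" and mi: "metrically_injective f xbar"
  shows "strongly_regular f xbar"
proof -
  obtain \<alpha> U0 V0 where a: "\<alpha> > 0" "xbar \<in> interior U0" "f xbar \<in> interior V0"
    and op: "\<And>x r. x \<in> U0 \<Longrightarrow> r > 0 \<Longrightarrow> ball (f x) (\<alpha> * r) \<inter> V0 \<subseteq> f ` ball x r"
    using lo unfolding linearly_open_def lin_open_with_def by blast
  obtain \<beta> \<delta> where b: "\<beta> > 0" "\<delta> > 0"
    and inj: "\<And>x1 x2. x1 \<in> cball xbar \<delta> \<Longrightarrow> x2 \<in> cball xbar \<delta> \<Longrightarrow> norm (f x1 - f x2) \<ge> \<beta> * norm (x1 - x2)"
    using mi unfolding metrically_injective_def metr_inj_with_def by blast
  have xU0: "xbar \<in> U0" using a(2) interior_subset by blast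
  define V where "V = ball (f xbar) (\<alpha> * \<delta>) \<inter> interior V0"
  have "open V" unfolding V_def by auto
  moreover have "f xbar \<in> V" unfolding V_def using a b by auto
  ultimately have fV: "f xbar \<in> interior V" by (simp add: interior_open)
  have xU: "xbar \<in> interior (cball xbar \<delta>)" using b by simp
  have "\<forall>y\<in>V. \<exists>!x. x \<in> cball xbar \<delta> \<and> f x = y"
  proof
    fix y assume y: "y \<in> V"
    then have "y \<in> ball (f xbar) (\<alpha> * \<delta>) \<inter> V0" unfolding V_def using interior_subset by blast
    then have "y \<in> f ` ball xbar \<delta>" using op[OF xU0 b(2)] by blast
    then obtain x where x: "x \<in> cball xbar \<delta>" "f x = y" by (force dest: less_imp_le)
    show "\<exists>!x. x \<in> cball xbar \<delta> \<and> f x = y"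
    proof (rule ex1I[of _ x])
      show "x \<in> cball xbar \<delta> \<and> f x = y" using x by simp
      fix x' assume h: "x' \<in> cball xbar \<delta> \<and> f x' = y"
      then have "\<beta> * norm (x' - x) \<le> 0" using inj[of x' x] x by auto
      then have "norm (x' - x) \<le> 0" using b(1)
        by (simp add: mult_le_0_iff)
      then show "x' = x" by simp
    qed
  qed
  then show ?thesis unfolding strongly_regular_def using lo xU fV by blast
qed

lemma fwd_dir:
  fixes f :: "'a::euclidean_space \<Rightarrow> 'b::euclidean_space"
  assumes cont: "continuous (at xbar) f" and sr: "strongly_regular f xbar"
    and lw: "lin_open_with f xbar \<alpha>"
  shows "metr_inj_with f xbar \<alpha>"
proof -
  obtain U0 V0 where a: "\<alpha> > 0" "xbar \<in> interior U0" "f xbar \<in> interior V0"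
    and op: "\<And>x r. x \<in> U0 \<Longrightarrow> r > 0 \<Longrightarrow> ball (f x) (\<alpha> * r) \<inter> V0 \<subseteq> f ` ball x r"
    using lw unfolding lin_open_with_def by blast
  obtain U1 V1 where s: "xbar \<in> interior U1" "f xbar \<in> interior V1"
    and un: "\<And>y. y \<in> V1 \<Longrightarrow> \<exists>!x. x \<in> U1 \<and> f x = y"
    using sr unfolding strongly_regular_def by blast
  have "xbar \<in> interior (U0 \<inter> U1)" using a s by simp
  then obtain \<epsilon> where e: "\<epsilon> > 0" "ball xbar \<epsilon> \<subseteq> U0 \<inter> U1"
    using mem_interior by blast
  have "f xbar \<in> interior (V0 \<inter> V1)" using a s by simp
  then obtain \<eta> where h: "\<eta> > 0" "ball (f xbar) \<eta> \<subseteq> V0 \<inter> V1"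
    using mem_interior by blast
  have pos: "min \<eta> (\<alpha> * \<epsilon> / 4) > 0" using h e a by simp
  obtain \<delta>0 where d0: "\<delta>0 > 0" and
    cd: "\<And>x. dist x xbar < \<delta>0 \<Longrightarrow> dist (f x) (f xbar) < min \<eta> (\<alpha> * \<epsilon> / 4)"
    using cont pos unfolding continuous_at_eps_delta by blast
  define \<delta> where "\<delta> = min \<delta>0 \<epsilon> / 4"
  have dpos: "\<delta> > 0" using d0 e unfolding \<delta>_def by simp
  have "\<forall>x1\<in>cball xbar \<delta>. \<forall>x2\<in>cball xbar \<delta>. norm (f x1 - f x2) \<ge> \<alpha> * norm (x1 - x2)"
  proof (intro ballI)
    fix x1 x2 assume x1: "x1 \<in> cball xbar \<delta>" and x2: "x2 \<in> cball xbar \<delta>"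
    have dx1: "dist x1 xbar \<le> \<delta>" "dist x2 xbar \<le> \<delta>" using x1 x2 by (auto simp: dist_commute)
    have lt1: "dist x1 xbar < \<delta>0" "dist x2 xbar < \<delta>0" "dist x1 xbar < \<epsilon>" "dist x2 xbar < \<epsilon>"
      using dx1 d0 e unfolding \<delta>_def by auto
    have f1: "dist (f x1) (f xbar) < min \<eta> (\<alpha> * \<epsilon> / 4)" using cd lt1 by blast
    have f2: "dist (f x2) (f xbar) < min \<eta> (\<alpha> * \<epsilon> / 4)" using cd lt1 by blast
    define d where "d = norm (f x1 - f x2)"
    have "d \<le> dist (f x1) (f xbar) + dist (f x2) (f xbar)"
      unfolding d_def using dist_triangle2[of "f x1" "f x2" "f xbar"] by (simp add: dist_norm)
    then have dlt: "d < \<alpha> * \<epsilon> / 2" using f1 f2 by auto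
    define a0 where "a0 = d / \<alpha>"
    have a0lt: "a0 < \<epsilon> / 2" unfolding a0_def using dlt a(1) by (simp add: field_simps)
    have a0ge: "a0 \<ge> 0" unfolding a0_def d_def using a by simp
    have x1U0: "x1 \<in> U0" using e lt1 by (auto simp: dist_commute)
    have x2U1: "x2 \<in> U1" using e lt1 by (auto simp: dist_commute)
    have fx2: "f x2 \<in> V0" "f x2 \<in> V1" using h f2 by (auto simp: dist_commute)
    have key: "norm (x1 - x2) < r" if r: "a0 < r" "r < \<epsilon> / 2" for r
    proof -
      have rpos: "r > 0" using r a0ge by simp
      have "d < \<alpha> * r" using r(1) a(1) unfolding a0_def by (simp add: field_simps)
      then have "f x2 \<in> ball (f x1) (\<alpha> * r) \<inter> V0" using fx2 unfolding d_def by (simp add: dist_norm)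
      then have "f x2 \<in> f ` ball x1 r" using op[OF x1U0 rpos] by blast
      then obtain x' where x': "dist x1 x' < r" "f x' = f x2" by auto
      have "dist x' xbar \<le> dist x' x1 + dist x1 xbar" by (rule dist_triangle)
      also have "\<dots> < \<epsilon>" using x'(1) r(2) dx1(1) unfolding \<delta>_def
        by (simp add: dist_commute) (smt (verit) e(1))
      finally have "x' \<in> U1" using e by (auto simp: dist_commute)
      then have "x' = x2" using un[OF fx2(2)] x2U1 x'(2) by blast
      then show ?thesis using x'(1) by (simp add: dist_norm)
    qed
    have "norm (x1 - x2) \<le> a0"
    proof (rule ccontr)
      assume "\<not> norm (x1 - x2) \<le> a0"
      then have c: "a0 < norm (x1 - x2)" by simp
      define r where "r = (a0 + min (norm (x1 - x2)) (\<epsilon>/2)) / 2"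
      have "a0 < r" "r < \<epsilon>/2" "r < norm (x1 - x2)" using c a0lt unfolding r_def by auto
      then show False using key by fastforce
    qed
    then show "norm (f x1 - f x2) \<ge> \<alpha> * norm (x1 - x2)"
      unfolding a0_def d_def using a(1) by (simp add: field_simps)
  qed
  then show ?thesis unfolding metr_inj_with_def using a(1) dpos by blast
qed

theorem mainTheorem4:
  fixes f :: "'a::euclidean_space \<Rightarrow> 'b::euclidean_space" and xbar :: 'a
  assumes "continuous (at xbar) f"
  shows "(strongly_regular f xbar \<longleftrightarrow> linearly_open f xbar \<and> metrically_injective f xbar)
         \<and> (strongly_regular f xbar \<longrightarrow> inj_mod f xbar \<ge> lop f xbar)"
proof (intro conjI impI iffI)
  assume sr: "strongly_regular f xbar"
  then show lo: "linearly_open f xbar" unfolding strongly_regular_def by blast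
  then show "metrically_injective f xbar"
    using fwd_dir[OF assms sr] unfolding linearly_open_def metrically_injective_def by blast
next
  assume "linearly_open f xbar \<and> metrically_injective f xbar"
  then show "strongly_regular f xbar" using back_dir by blast
next
  assume sr: "strongly_regular f xbar"
  have lo: "linearly_open f xbar" using sr unfolding strongly_regular_def by blast
  have mi: "metrically_injective f xbar"
    using fwd_dir[OF assms sr] lo unfolding linearly_open_def metrically_injective_def by blast
  have "Sup {ereal \<alpha> | \<alpha>. lin_open_with f xbar \<alpha>} \<le> Sup {ereal \<beta> | \<beta>. metr_inj_with f xbar \<beta>}"
  proof (rule Sup_least)
    fix z assume "z \<in> {ereal \<alpha> | \<alpha>. lin_open_with f xbar \<alpha>}"
    then obtain \<alpha> where "z = ereal \<alpha>" "lin_open_with f xbar \<alpha>" by blast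
    then show "z \<le> Sup {ereal \<beta> | \<beta>. metr_inj_with f xbar \<beta>}"
      using fwd_dir[OF assms sr] by (auto intro: Sup_upper)
  qed
  then show "inj_mod f xbar \<ge> lop f xbar" unfolding inj_mod_def lop_def using lo mi by simp
qed

end
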